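(* Let $\mathbf C$ be a category of coframes and $L$ a $\mathbf C$-object. (1) If $L$ is spatial, then $\nu=\operatorname{adh}_{\lim_\nu}$ for every adherence structure $\nu$ on $L$. (2) If $L$ is prime-continuous, then $\lim=\lim_{\operatorname{adh}_{\lim}}$ for every classical pretopological convergence structure $\lim$ on $L$. (3) If $L$ is both spatial and prime-continuous, then the maps $\nu\mapsto\lim_\nu$ and $\lim\mapsto\operatorname{adh}_{\lim}$ define an order isomorphism between adherence structures and classical pretopological convergence structures on $L$ (both ordered pointwise).
   Context: A category of coframes has coframes (complete lattices where arbitrary infima distribute over binary suprema) as objects and coframe morphisms. $\mathcal C_L$ is the set of complemented elements of $L$. A filter on $L$ is a non-empty upward-closed subset closed under binary meets ($L$ allowed); $\mathbb F L$ is the set of filters. For $\mathcal A\subseteq L$, $\mathcal A^\#=\{\ell: a\wedge\ell\ne\bot\ \forall a\in\mathcal A\}$. A convergence structure on $L$ is a monotone map $\lim:\mathbb F L\to L$; it is pretopological if $\lim\bigcap_i\mathcal F_i=\bigwedge_i\lim\mathcal F_i$ for every family of filters, and classical if $\mathcal F\cap\mathcal C_L=\mathcal G\cap\mathcal C_L$ implies $\lim\mathcal F=\lim\mathcal G$. Its raw adherence is $\operatorname{adh}^0_{\lim}\ell=\bigvee\{\lim\mathcal F:\ell\in\mathcal F^\#\}$, and its adherence is $\operatorname{adh}_{\lim}\ell=\bigwedge\{\operatorname{adh}^0_{\lim}a:a\in\mathcal C_L,a\ge\ell\}$. An adherence structure on $L$ is a monotone $\nu:L\to L$ preserving finite suprema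 of complemented elements with $\nu(\ell)=\bigwedge\{\nu(a):a\in\mathcal C_L,a\ge\ell\}$; it induces $\lim_\nu\mathcal F=\bigwedge\{\nu(a):a\in\mathcal C_L\cap\mathcal F^\#\}$. $L$ is spatial if every element is a supremum of join-prime elements (an element $x\neq\bot$ with $x\le\ell_1\vee\ell_2$ implying $x\le\ell_1$ or $x\le\ell_2$). Write $\ell\lll\ell'$ if for every $S\subseteq L$ with $\ell'\le\bigvee S$ some element of $S$ is $\ge\ell$; $L$ is prime-continuous if every element $\ell$ is the supremum of the elements $\lll\ell$. *)

theory Defs
  imports Main
begin

class coframe = complete_lattice +
  assumes sup_Inf_distrib_coframe: "sup a (Inf S) = (INF s\<in>S. sup a s)"

definition complemented :: "'a::coframe set" where
  "complemented = {a. \<exists>b. inf a b = bot \<and> sup a b = top}"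

definition is_filter :: "'a::coframe set \<Rightarrow> bool" where
  "is_filter F \<longleftrightarrow> F \<noteq> {} \<and> (\<forall>x y. x \<in> F \<and> x \<le> y \<longrightarrow> y \<in> F)
                   \<and> (\<forall>x y. x \<in> F \<and> y \<in> F \<longrightarrow> inf x y \<in> F)"

definition sharp :: "'a::coframe set \<Rightarrow> 'a set" where
  "sharp A = {l. \<forall>a\<in>A. inf a l \<noteq> bot}"

text \<open>Convergence structures: monotone maps from filters to L (values on non-filters irrelevant).\<close>
definition convergence_structure :: "('a::coframe set \<Rightarrow> 'a) \<Rightarrow> bool" where
  "convergence_structure lim \<longleftrightarrow>
     (\<forall>F G. is_filter F \<and> is_filter G \<and> F \<subseteq> G \<longrightarrow> lim F \<le> lim G)"

definition pretopological :: "('a::coframe set \<Rightarrow> 'a) \<Rightarrow> bool" where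
  "pretopological lim \<longleftrightarrow>
     (\<forall>\<FF>. (\<forall>F\<in>\<FF>. is_filter F) \<longrightarrow> lim (\<Inter>\<FF>) = (INF F\<in>\<FF>. lim F))"

definition classical :: "('a::coframe set \<Rightarrow> 'a) \<Rightarrow> bool" where
  "classical lim \<longleftrightarrow>
     (\<forall>F G. is_filter F \<and> is_filter G \<and> F \<inter> complemented = G \<inter> complemented
            \<longrightarrow> lim F = lim G)"

definition classical_pretop_conv :: "('a::coframe set \<Rightarrow> 'a) \<Rightarrow> bool" where
  "classical_pretop_conv lim \<longleftrightarrow>
     convergence_structure lim \<and> pretopological lim \<and> classical lim"

definition raw_adh :: "('a::coframe set \<Rightarrow> 'a) \<Rightarrow> 'a \<Rightarrow> 'a" where
  "raw_adh lim l = Sup {lim F | F. is_filter F \<and> l \<in> sharp F}"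

definition adh :: "('a::coframe set \<Rightarrow> 'a) \<Rightarrow> 'a \<Rightarrow> 'a" where
  "adh lim l = Inf {raw_adh lim a | a. a \<in> complemented \<and> l \<le> a}"

text \<open>Adherence structures; "finite suprema" includes the empty supremum (bottom).\<close>
definition adherence_structure :: "('a::coframe \<Rightarrow> 'a) \<Rightarrow> bool" where
  "adherence_structure \<nu> \<longleftrightarrow>
     mono \<nu> \<and> \<nu> bot = bot
     \<and> (\<forall>a b. a \<in> complemented \<and> b \<in> complemented \<longrightarrow> \<nu> (sup a b) = sup (\<nu> a) (\<nu> b))
     \<and> (\<forall>l. \<nu> l = Inf {\<nu> a | a. a \<in> complemented \<and> l \<le> a})"

definition lim_of :: "('a::coframe \<Rightarrow> 'a) \<Rightarrow> 'a set \<Rightarrow> 'a" where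
  "lim_of \<nu> F = Inf {\<nu> a | a. a \<in> complemented \<inter> sharp F}"

definition join_prime :: "'a::coframe \<Rightarrow> bool" where
  "join_prime x \<longleftrightarrow> x \<noteq> bot \<and> (\<forall>l1 l2. x \<le> sup l1 l2 \<longrightarrow> x \<le> l1 \<or> x \<le> l2)"

definition spatial :: "'a::coframe itself \<Rightarrow> bool" where
  "spatial _ \<longleftrightarrow> (\<forall>l::'a. l = Sup {x. join_prime x \<and> x \<le> l})"

definition prime_below :: "'a::coframe \<Rightarrow> 'a \<Rightarrow> bool" where
  "prime_below l l' \<longleftrightarrow> (\<forall>S. l' \<le> Sup S \<longrightarrow> (\<exists>s\<in>S. l \<le> s))"

definition prime_continuous :: "'a::coframe itself \<Rightarrow> bool" where
  "prime_continuous _ \<longleftrightarrow> (\<forall>l::'a. l = Sup {m. prime_below m l})"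

end

theory Submission
  imports Defs
begin

context coframe begin
subclass distrib_lattice
proof
  fix x y z :: 'a
  show "sup x (inf y z) = inf (sup x y) (sup x z)"
    using sup_Inf_distrib_coframe[of x "{y,z}"] by simp
qed
end

lemma compl_le:
  fixes a b f :: "'a::coframe"
  assumes "sup a b = top" "inf f a = bot" shows "f \<le> b"
proof -
  have "f = inf f (sup a b)" using assms by simp
  also have "\<dots> = sup (inf f a) (inf f b)" by (rule inf_sup_distrib1)
  also have "\<dots> = inf f b" using assms by simp
  finally show ?thesis by (metis inf.cobounded2)
qed

lemma compl_inf:
  fixes c1 d1 c2 d2 :: "'a::coframe"
  assumes "inf c1 d1 = bot" "sup c1 d1 = top" "inf c2 d2 = bot" "sup c2 d2 = top"
  shows "inf (inf c1 c2) (sup d1 d2) = bot" "sup (inf c1 c2) (sup d1 d2) = top"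
proof -
  have "inf (inf c1 c2) (sup d1 d2) = sup (inf (inf c1 c2) d1) (inf (inf c1 c2) d2)" by (rule inf_sup_distrib1)
  also have "inf (inf c1 c2) d1 = bot" using assms(1) by (metis inf.assoc inf.commute inf_bot_right)
  also have "inf (inf c1 c2) d2 = bot" using assms(3) by (metis inf.assoc inf_bot_right)
  finally show "inf (inf c1 c2) (sup d1 d2) = bot" by simp
  have "sup (inf c1 c2) (sup d1 d2) = inf (sup c1 (sup d1 d2)) (sup c2 (sup d1 d2))" by (rule sup_inf_distrib2)
  also have "sup c1 (sup d1 d2) = top" using assms(2) by (metis sup.assoc sup_top_left)
  also have "sup c2 (sup d1 d2) = top" using assms(4) by (metis sup.assoc sup.commute sup_top_left)
  finally show "sup (inf c1 c2) (sup d1 d2) = top" by simp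
qed

lemma complemented_inf: "a \<in> complemented \<Longrightarrow> b \<in> complemented \<Longrightarrow> inf a b \<in> complemented"
proof -
  assume "a \<in> complemented" "b \<in> complemented"
  then obtain d1 d2 where d: "inf a d1 = bot" "sup a d1 = top" "inf b d2 = bot" "sup b d2 = top"
    unfolding complemented_def by blast
  show ?thesis unfolding complemented_def
    by (rule CollectI, rule exI[of _ "sup d1 d2"], rule conjI, (rule compl_inf[OF d])+)
qed

lemma complemented_top: "top \<in> complemented"
  unfolding complemented_def by (rule CollectI, rule exI[of _ bot]) simp

lemma complemented_bot: "bot \<in> complemented"
  unfolding complemented_def by (rule CollectI, rule exI[of _ top]) simp

lemma complemented_sym: "inf c d = bot \<Longrightarrow> sup c d = top \<Longrightarrow> d \<in> complemented"
  unfolding complemented_def by (rule CollectI, rule exI[of _ c]) (simp add: inf.commute sup.commute)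

lemma filter_top: "is_filter F \<Longrightarrow> top \<in> F"
proof -
  assume F: "is_filter F"
  then obtain x where "x \<in> F" unfolding is_filter_def by blast
  moreover have "x \<le> top" by (rule top_greatest)
  ultimately show "top \<in> F" using F unfolding is_filter_def by blast
qed

lemma filter_Inter: "\<forall>F\<in>FF. is_filter F \<Longrightarrow> is_filter (\<Inter>FF)"
proof -
  assume FF: "\<forall>F\<in>FF. is_filter F"
  have "top \<in> \<Inter>FF" using FF filter_top by blast
  hence ne: "\<Inter>FF \<noteq> {}" by blast
  show ?thesis unfolding is_filter_def
  proof (intro conjI allI impI)
    show "\<Inter>FF \<noteq> {}" by (rule ne)
  next
    fix x y assume "x \<in> \<Inter>FF \<and> x \<le> y" thus "y \<in> \<Inter>FF" using FF unfolding is_filter_def by blast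
  next
    fix x y assume "x \<in> \<Inter>FF \<and> y \<in> \<Inter>FF" thus "inf x y \<in> \<Inter>FF" using FF unfolding is_filter_def by blast
  qed
qed

lemma sharp_up: "l \<in> sharp F \<Longrightarrow> l \<le> l' \<Longrightarrow> l' \<in> sharp F"
  unfolding sharp_def
proof (rule CollectI, rule ballI)
  fix a assume h: "l \<in> {l. \<forall>a\<in>F. inf a l \<noteq> bot}" "l \<le> l'" "a \<in> F"
  have "inf a l \<noteq> bot" using h by blast
  moreover have "inf a l \<le> inf a l'" using h(2) by (rule inf_mono[OF order_refl])
  ultimately show "inf a l' \<noteq> bot" using bot_unique by metis
qed

lemma sharp_anti: "F \<subseteq> G \<Longrightarrow> sharp G \<subseteq> sharp F"
  unfolding sharp_def by blast

lemma sharp_bot: "is_filter F \<Longrightarrow> bot \<notin> sharp F"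
proof -
  assume "is_filter F"
  then obtain x where "x \<in> F" unfolding is_filter_def by blast
  thus "bot \<notin> sharp F" unfolding sharp_def by auto
qed

lemma raw_adh_mono: "l \<le> l' \<Longrightarrow> raw_adh lim l \<le> raw_adh lim l'"
  unfolding raw_adh_def
proof (rule Sup_subset_mono, rule subsetI)
  fix y assume "l \<le> l'" "y \<in> {lim F |F. is_filter F \<and> l \<in> sharp F}"
  then obtain F where "y = lim F" "is_filter F" "l \<in> sharp F" by blast
  moreover have "l' \<in> sharp F" using calculation(3) \<open>l \<le> l'\<close> by (rule sharp_up)
  ultimately show "y \<in> {lim F |F. is_filter F \<and> l' \<in> sharp F}" by blast
qed

lemma adh_compl: "a \<in> complemented \<Longrightarrow> adh lim a = raw_adh lim a"
  unfolding adh_def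
proof (rule antisym)
  assume a: "a \<in> complemented"
  show "Inf {raw_adh lim b |b. b \<in> complemented \<and> a \<le> b} \<le> raw_adh lim a"
    by (rule Inf_lower) (use a in blast)
  show "raw_adh lim a \<le> Inf {raw_adh lim b |b. b \<in> complemented \<and> a \<le> b}"
  proof (rule Inf_greatest)
    fix y assume "y \<in> {raw_adh lim b |b. b \<in> complemented \<and> a \<le> b}"
    then obtain b where "y = raw_adh lim b" "a \<le> b" by blast
    thus "raw_adh lim a \<le> y" using raw_adh_mono by blast
  qed
qed

lemma part1_raw:
  fixes nu :: "'a::coframe \<Rightarrow> 'a"
  assumes sp: "spatial TYPE('a)" and ad: "adherence_structure nu" and a: "a \<in> complemented"
  shows "raw_adh (lim_of nu) a = nu a"
proof (rule antisym)
  show "raw_adh (lim_of nu) a \<le> nu a"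
    unfolding raw_adh_def
  proof (rule Sup_least)
    fix y assume "y \<in> {lim_of nu F |F. is_filter F \<and> a \<in> sharp F}"
    then obtain F where F: "y = lim_of nu F" "a \<in> sharp F" by blast
    show "y \<le> nu a" unfolding F(1) lim_of_def by (rule Inf_lower) (use a F(2) in blast)
  qed
next
  have mono: "mono nu" and nb: "nu bot = bot"
    and ns: "\<And>a b. a \<in> complemented \<Longrightarrow> b \<in> complemented \<Longrightarrow> nu (sup a b) = sup (nu a) (nu b)"
    using ad unfolding adherence_structure_def by blast+
  have "x \<le> raw_adh (lim_of nu) a" if jp: "join_prime x" and xa: "x \<le> nu a" for x
  proof -
    define G where "G = {c. \<exists>d. inf c d = bot \<and> sup c d = top \<and> \<not> x \<le> nu d}"
    define F where "F = {l. \<exists>c\<in>G. c \<le> l}"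
    have xb: "x \<noteq> bot" using jp unfolding join_prime_def by auto
    have topG: "top \<in> G" unfolding G_def by (rule CollectI, rule exI[of _ bot]) (use xb in \<open>simp add: nb bot_unique\<close>)
    have Ginf: "inf c1 c2 \<in> G" if c1G: "c1 \<in> G" and c2G: "c2 \<in> G" for c1 c2
    proof -
      obtain d1 where d1: "inf c1 d1 = bot" "sup c1 d1 = top" "\<not> x \<le> nu d1" using c1G unfolding G_def by blast
      obtain d2 where d2: "inf c2 d2 = bot" "sup c2 d2 = top" "\<not> x \<le> nu d2" using c2G unfolding G_def by blast
      have "d1 \<in> complemented" "d2 \<in> complemented" using d1 d2 complemented_sym by blast+
      hence "nu (sup d1 d2) = sup (nu d1) (nu d2)" using ns by blast
      hence "\<not> x \<le> nu (sup d1 d2)" using jp d1 d2 unfolding join_prime_def by auto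
      thus ?thesis unfolding G_def using compl_inf[OF d1(1,2) d2(1,2)] by blast
    qed
    have filt: "is_filter F"
      unfolding is_filter_def F_def
    proof (intro conjI allI impI)
      show "{l. \<exists>c\<in>G. c \<le> l} \<noteq> {}" using topG by auto
    next
      fix l1 l2 assume "l1 \<in> {l. \<exists>c\<in>G. c \<le> l} \<and> l1 \<le> l2"
      thus "l2 \<in> {l. \<exists>c\<in>G. c \<le> l}" by (auto intro: order_trans)
    next
      fix l1 l2 assume "l1 \<in> {l. \<exists>c\<in>G. c \<le> l} \<and> l2 \<in> {l. \<exists>c\<in>G. c \<le> l}"
      then obtain c1 c2 where "c1 \<in> G" "c2 \<in> G" "c1 \<le> l1" "c2 \<le> l2" by auto
      moreover have "inf c1 c2 \<le> inf l1 l2" using \<open>c1 \<le> l1\<close> \<open>c2 \<le> l2\<close> by (rule inf_mono)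
      ultimately show "inf l1 l2 \<in> {l. \<exists>c\<in>G. c \<le> l}" using Ginf by blast
    qed
    have ash: "a \<in> sharp F"
      unfolding sharp_def
    proof (clarify)
      fix l assume "l \<in> F" "inf l a = bot"
      then obtain c d where c: "c \<le> l" "inf c d = bot" "sup c d = top" "\<not> x \<le> nu d"
        using F_def G_def by auto
      have "inf a c = bot" using c(1) \<open>inf l a = bot\<close>
        by (metis bot_unique inf.commute inf_mono order_refl)
      hence "a \<le> d" using compl_le[OF c(3)] by blast
      hence "nu a \<le> nu d" by (rule monoD[OF mono])
      thus False using xa c(4) by (meson order_trans)
    qed
    have "x \<le> lim_of nu F"
      unfolding lim_of_def
    proof (rule Inf_greatest, clarify)
      fix b assume b: "b \<in> complemented" "b \<in> sharp F"
      show "x \<le> nu b"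
      proof (rule ccontr)
        assume nx: "\<not> x \<le> nu b"
        obtain e where e: "inf b e = bot" "sup b e = top" using b(1) complemented_def by auto
        have "e \<in> G" unfolding G_def
          by (rule CollectI, rule exI[of _ b]) (use e nx in \<open>simp add: inf.commute sup.commute\<close>)
        hence "e \<in> F" unfolding F_def by auto
        thus False using b(2) e(1) unfolding sharp_def by (auto simp: inf.commute)
      qed
    qed
    also have "lim_of nu F \<le> raw_adh (lim_of nu) a"
      unfolding raw_adh_def using filt ash by (auto intro!: Sup_upper)
    finally show ?thesis .
  qed
  hence "Sup {x. join_prime x \<and> x \<le> nu a} \<le> raw_adh (lim_of nu) a" by (auto intro!: Sup_least)
  moreover have "\<forall>l::'a. l = Sup {x. join_prime x \<and> x \<le> l}" using sp unfolding spatial_def .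
  ultimately show "nu a \<le> raw_adh (lim_of nu) a" by (metis (no_types) spec[of _ "nu a"])
qed

lemma part1:
  fixes nu :: "'a::coframe \<Rightarrow> 'a"
  assumes sp: "spatial TYPE('a)" and ad: "adherence_structure nu"
  shows "adh (lim_of nu) = nu"
proof
  fix l
  have "{raw_adh (lim_of nu) a | a. a \<in> complemented \<and> l \<le> a} = {nu a | a. a \<in> complemented \<and> l \<le> a}"
    using part1_raw[OF sp ad] by metis
  thus "adh (lim_of nu) l = nu l" unfolding adh_def using ad unfolding adherence_structure_def by metis
qed

lemma part2:
  fixes lim :: "'a::coframe set \<Rightarrow> 'a"
  assumes pc: "prime_continuous TYPE('a)" and cpc: "classical_pretop_conv lim" and F: "is_filter F"
  shows "lim_of (adh lim) F = lim F"
proof -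
  have cs: "\<And>F G. is_filter F \<Longrightarrow> is_filter G \<Longrightarrow> F \<subseteq> G \<Longrightarrow> lim F \<le> lim G"
    and pt: "\<And>FF. \<forall>F\<in>FF. is_filter F \<Longrightarrow> lim (\<Inter>FF) = (INF F\<in>FF. lim F)"
    and cl: "\<And>F G. is_filter F \<Longrightarrow> is_filter G \<Longrightarrow> F \<inter> complemented = G \<inter> complemented \<Longrightarrow> lim F = lim G"
    using cpc unfolding classical_pretop_conv_def convergence_structure_def pretopological_def classical_def
    by blast+
  define l where "l = lim_of (adh lim) F"
  have ge: "lim F \<le> l"
    unfolding l_def lim_of_def
  proof (rule Inf_greatest, clarify)
    fix a assume a: "a \<in> complemented" "a \<in> sharp F"
    have "lim F \<le> raw_adh lim a" unfolding raw_adh_def using F a by (auto intro!: Sup_upper)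
    thus "lim F \<le> adh lim a" using adh_compl[OF a(1)] by simp
  qed
  have "m \<le> lim F" if pb: "prime_below m l" for m
  proof -
    define V where "V = \<Inter>{G. is_filter G \<and> m \<le> lim G}"
    have Vf: "is_filter V" unfolding V_def by (rule filter_Inter) auto
    have mV: "m \<le> lim V" unfolding V_def by (subst pt) (auto intro!: INF_greatest)
    define H where "H = {y. \<exists>c\<in>V \<inter> complemented. c \<le> y}"
    have Hf: "is_filter H"
      unfolding is_filter_def H_def
    proof (intro conjI allI impI)
      show "{y. \<exists>c\<in>V \<inter> complemented. c \<le> y} \<noteq> {}"
        using filter_top[OF Vf] complemented_top by blast
    next
      fix x y assume "x \<in> {y. \<exists>c\<in>V \<inter> complemented. c \<le> y} \<and> x \<le> y"
      thus "y \<in> {y. \<exists>c\<in>V \<inter> complemented. c \<le> y}" by (auto intro: order_trans)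
    next
      fix x y assume "x \<in> {y. \<exists>c\<in>V \<inter> complemented. c \<le> y} \<and> y \<in> {y. \<exists>c\<in>V \<inter> complemented. c \<le> y}"
      then obtain c1 c2 where c: "c1 \<in> V" "c1 \<in> complemented" "c2 \<in> V" "c2 \<in> complemented" "c1 \<le> x" "c2 \<le> y" by auto
      have "inf c1 c2 \<in> V" using Vf c unfolding is_filter_def by blast
      moreover have "inf c1 c2 \<in> complemented" using c complemented_inf by blast
      moreover have "inf c1 c2 \<le> inf x y" using c(5,6) by (rule inf_mono)
      ultimately show "inf x y \<in> {y. \<exists>c\<in>V \<inter> complemented. c \<le> y}" by blast
    qed
    have "H \<inter> complemented = V \<inter> complemented"
      using Vf unfolding H_def is_filter_def by blast
    hence "lim H = lim V" using cl Hf Vf by blast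
    have HF: "H \<subseteq> F"
    proof
      fix y assume "y \<in> H"
      then obtain c where c: "c \<in> V" "c \<in> complemented" "c \<le> y" unfolding H_def by auto
      have "c \<in> F"
      proof (rule ccontr)
        assume cF: "c \<notin> F"
        obtain d where d: "inf c d = bot" "sup c d = top" using c(2) complemented_def by auto
        have dc: "d \<in> complemented" using d complemented_sym by blast
        have ds: "d \<in> sharp F"
          unfolding sharp_def
        proof (clarify)
          fix f assume "f \<in> F" "inf f d = bot"
          hence "f \<le> c" using compl_le[of d c f] d by (simp add: sup.commute)
          thus False using F \<open>f \<in> F\<close> cF unfolding is_filter_def by blast
        qed
        have "l \<le> adh lim d" unfolding l_def lim_of_def using dc ds by (auto intro!: Inf_lower)
        hence "l \<le> Sup {lim G | G. is_filter G \<and> d \<in> sharp G}" using adh_compl[OF dc] unfolding raw_adh_def by simp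
        then obtain G where G: "is_filter G" "d \<in> sharp G" "m \<le> lim G"
          using pb unfolding prime_below_def by blast
        hence "V \<subseteq> G" unfolding V_def by blast
        hence "c \<in> G" using c by blast
        thus False using G(2) d(1) unfolding sharp_def by blast
      qed
      thus "y \<in> F" using c(3) F unfolding is_filter_def by blast
    qed
    have "m \<le> lim H" using mV \<open>lim H = lim V\<close> by simp
    also have "lim H \<le> lim F" using cs Hf F HF by blast
    finally show ?thesis .
  qed
  hence "Sup {m. prime_below m l} \<le> lim F" by (auto intro!: Sup_least)
  moreover have "\<forall>l::'a. l = Sup {m. prime_below m l}" using pc unfolding prime_continuous_def .
  ultimately have "l \<le> lim F" by (metis (no_types) spec[of _ l])
  thus ?thesis using ge l_def by simp
qed

lemma lim_of_cpc:
  fixes nu :: "'a::coframe \<Rightarrow> 'a"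
  assumes ad: "adherence_structure nu"
  shows "classical_pretop_conv (lim_of nu)"
  unfolding classical_pretop_conv_def
proof (intro conjI)
  show "convergence_structure (lim_of nu)"
    unfolding convergence_structure_def
  proof (intro allI impI)
    fix F G :: "'a set" assume "is_filter F \<and> is_filter G \<and> F \<subseteq> G"
    hence "sharp G \<subseteq> sharp F" using sharp_anti by blast
    hence "{nu a |a. a \<in> complemented \<inter> sharp G} \<subseteq> {nu a |a. a \<in> complemented \<inter> sharp F}" by blast
    thus "lim_of nu F \<le> lim_of nu G" unfolding lim_of_def by (rule Inf_superset_mono)
  qed
next
  show "pretopological (lim_of nu)"
    unfolding pretopological_def
  proof (intro allI impI antisym)
    fix FF :: "'a set set" assume FF: "\<forall>F\<in>FF. is_filter F"
    show "lim_of nu (\<Inter>FF) \<le> (INF F\<in>FF. lim_of nu F)"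
    proof (rule INF_greatest)
      fix F assume "F \<in> FF"
      hence "sharp F \<subseteq> sharp (\<Inter>FF)" by (intro sharp_anti) blast
      hence "{nu a |a. a \<in> complemented \<inter> sharp F} \<subseteq> {nu a |a. a \<in> complemented \<inter> sharp (\<Inter>FF)}" by blast
      thus "lim_of nu (\<Inter>FF) \<le> lim_of nu F" unfolding lim_of_def by (rule Inf_superset_mono)
    qed
    show "(INF F\<in>FF. lim_of nu F) \<le> lim_of nu (\<Inter>FF)"
      unfolding lim_of_def[of nu "\<Inter>FF"]
    proof (rule Inf_greatest, clarify)
      fix a assume a: "a \<in> complemented" "a \<in> sharp (\<Inter>FF)"
      obtain b where b: "inf a b = bot" "sup a b = top" using a(1) complemented_def by auto
      have "\<exists>F\<in>FF. a \<in> sharp F"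
      proof (rule ccontr)
        assume "\<not> (\<exists>F\<in>FF. a \<in> sharp F)"
        hence "\<forall>F\<in>FF. b \<in> F"
        proof (intro ballI)
          fix F assume "\<not> (\<exists>F\<in>FF. a \<in> sharp F)" "F \<in> FF"
          then obtain f where "f \<in> F" "inf f a = bot" unfolding sharp_def by auto
          hence "f \<le> b" using compl_le[OF b(2)] by blast
          thus "b \<in> F" using FF \<open>F \<in> FF\<close> \<open>f \<in> F\<close> unfolding is_filter_def by blast
        qed
        hence "b \<in> \<Inter>FF" by blast
        thus False using a(2) b(1) unfolding sharp_def by (auto simp: inf.commute)
      qed
      then obtain F where F: "F \<in> FF" "a \<in> sharp F" by blast
      have "(INF F\<in>FF. lim_of nu F) \<le> lim_of nu F" using F(1) by (rule INF_lower)
      also have "\<dots> \<le> nu a" unfolding lim_of_def using a(1) F(2) by (auto intro!: Inf_lower)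
      finally show "(INF F\<in>FF. lim_of nu F) \<le> nu a" .
    qed
  qed
next
  show "classical (lim_of nu)"
    unfolding classical_def
  proof (intro allI impI)
    fix F G :: "'a set" assume h: "is_filter F \<and> is_filter G \<and> F \<inter> complemented = G \<inter> complemented"
    have key: "complemented \<inter> sharp F \<subseteq> complemented \<inter> sharp G"
      if h: "is_filter F" "is_filter G" "F \<inter> complemented = G \<inter> complemented" for F G :: "'a set"
    proof (clarify)
      fix c assume c: "c \<in> complemented" "c \<in> sharp F"
      obtain d where d: "inf c d = bot" "sup c d = top" using c(1) complemented_def by auto
      show "c \<in> sharp G" unfolding sharp_def
      proof (clarify)
        fix g assume "g \<in> G" "inf g c = bot"
        hence "g \<le> d" using compl_le[OF d(2)] by blast
        hence "d \<in> G" using h(2) \<open>g \<in> G\<close> unfolding is_filter_def by blast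
        moreover have "d \<in> complemented" using d complemented_sym by blast
        ultimately have "d \<in> F" using h(3) by blast
        thus False using c(2) d(1) unfolding sharp_def by (auto simp: inf.commute)
      qed
    qed
    have "complemented \<inter> sharp F = complemented \<inter> sharp G"
      using key[of F G] key[of G F] h by blast
    thus "lim_of nu F = lim_of nu G" unfolding lim_of_def by simp
  qed
qed

lemma raw_adh_sup: "raw_adh lim (sup a b) = sup (raw_adh lim a) (raw_adh lim b)"
proof (rule antisym)
  show "raw_adh lim (sup a b) \<le> sup (raw_adh lim a) (raw_adh lim b)"
    unfolding raw_adh_def[of lim "sup a b"]
  proof (rule Sup_least, clarify)
    fix F assume F: "is_filter F" "sup a b \<in> sharp F"
    have "a \<in> sharp F \<or> b \<in> sharp F"
    proof (rule ccontr)
      assume "\<not> (a \<in> sharp F \<or> b \<in> sharp F)"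
      then obtain f1 f2 where "f1 \<in> F" "inf f1 a = bot" "f2 \<in> F" "inf f2 b = bot" unfolding sharp_def by auto
      moreover have "inf f1 f2 \<in> F" using F(1) calculation unfolding is_filter_def by blast
      moreover have "inf (inf f1 f2) (sup a b) = bot"
        using calculation by (metis (no_types, lifting) inf_sup_distrib1 inf.assoc inf.commute inf_bot_right sup_bot.right_neutral)
      ultimately show False using F(2) unfolding sharp_def by blast
    qed
    thus "lim F \<le> sup (raw_adh lim a) (raw_adh lim b)"
      unfolding raw_adh_def using F(1) by (auto intro: le_supI1 le_supI2 Sup_upper)
  qed
  show "sup (raw_adh lim a) (raw_adh lim b) \<le> raw_adh lim (sup a b)"
    by (simp add: raw_adh_mono)
qed

lemma adh_as:
  fixes lim :: "'a::coframe set \<Rightarrow> 'a"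
  shows "adherence_structure (adh lim)"
  unfolding adherence_structure_def
proof (intro conjI allI impI)
  show "mono (adh lim)"
  proof (rule monoI)
    fix x y :: 'a assume "x \<le> y"
    have "{raw_adh lim a |a. a \<in> complemented \<and> y \<le> a} \<subseteq> {raw_adh lim a |a. a \<in> complemented \<and> x \<le> a}"
    proof
      fix z assume "z \<in> {raw_adh lim a |a. a \<in> complemented \<and> y \<le> a}"
      then obtain a where a: "z = raw_adh lim a" "a \<in> complemented" "y \<le> a" by blast
      have "x \<le> a" using \<open>x \<le> y\<close> a(3) by (rule order_trans)
      thus "z \<in> {raw_adh lim a |a. a \<in> complemented \<and> x \<le> a}" using a by blast
    qed
    thus "adh lim x \<le> adh lim y" unfolding adh_def by (rule Inf_superset_mono)
  qed
  have h1: "adh lim bot \<le> raw_adh lim bot" unfolding adh_def by (rule Inf_lower) (use complemented_bot in blast)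
  have e: "{lim F |F. is_filter F \<and> bot \<in> sharp F} = {}" using sharp_bot by blast
  have h2: "raw_adh lim bot = bot" unfolding raw_adh_def e by simp
  show "adh lim bot = bot" using h1 h2 by (intro le_bot) simp
next
  fix a b :: 'a assume "a \<in> complemented \<and> b \<in> complemented"
  moreover have "sup a b \<in> complemented"
  proof -
    obtain d1 d2 where d: "inf a d1 = bot" "sup a d1 = top" "inf b d2 = bot" "sup b d2 = top"
      using calculation unfolding complemented_def by blast
    have "inf d1 a = bot" "sup d1 a = top" "inf d2 b = bot" "sup d2 b = top"
      using d by (simp_all add: inf.commute sup.commute)
    from compl_inf[OF this] show ?thesis by (rule complemented_sym)
  qed
  ultimately show "adh lim (sup a b) = sup (adh lim a) (adh lim b)"
    by (simp add: adh_compl raw_adh_sup)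
next
  fix l :: 'a
  have eq: "{adh lim a | a. a \<in> complemented \<and> l \<le> a} = {raw_adh lim a | a. a \<in> complemented \<and> l \<le> a}"
  proof (rule set_eqI, rule iffI)
    fix y assume "y \<in> {adh lim a | a. a \<in> complemented \<and> l \<le> a}"
    then obtain a where a: "y = adh lim a" "a \<in> complemented" "l \<le> a" by blast
    hence "y = raw_adh lim a" using adh_compl by simp
    thus "y \<in> {raw_adh lim a | a. a \<in> complemented \<and> l \<le> a}" using a by blast
  next
    fix y assume "y \<in> {raw_adh lim a | a. a \<in> complemented \<and> l \<le> a}"
    then obtain a where a: "y = raw_adh lim a" "a \<in> complemented" "l \<le> a" by blast
    have "y = adh lim a" by (simp only: a(1) adh_compl[OF a(2)])
    thus "y \<in> {adh lim a | a. a \<in> complemented \<and> l \<le> a}" using a by blast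
  qed
  have "adh lim l = Inf {raw_adh lim a | a. a \<in> complemented \<and> l \<le> a}" by (rule adh_def)
  also have "\<dots> = Inf {adh lim a | a. a \<in> complemented \<and> l \<le> a}" by (rule arg_cong[where f=Inf, OF eq[symmetric]])
  finally show "adh lim l = Inf {adh lim a | a. a \<in> complemented \<and> l \<le> a}" .
qed

lemma adh_mono_lim:
  assumes h: "\<forall>F. is_filter F \<longrightarrow> lim1 F \<le> lim2 F"
  shows "adh lim1 \<le> adh lim2"
proof (rule le_funI)
  fix l
  have r: "raw_adh lim1 a \<le> raw_adh lim2 a" for a
    unfolding raw_adh_def
  proof (rule Sup_least)
    fix y assume "y \<in> {lim1 F |F. is_filter F \<and> a \<in> sharp F}"
    then obtain F where F: "y = lim1 F" "is_filter F" "a \<in> sharp F" by blast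
    have "y \<le> lim2 F" using h F by simp
    also have "lim2 F \<le> Sup {lim2 F |F. is_filter F \<and> a \<in> sharp F}" by (rule Sup_upper) (use F in blast)
    finally show "y \<le> Sup {lim2 F |F. is_filter F \<and> a \<in> sharp F}" .
  qed
  show "adh lim1 l \<le> adh lim2 l"
    unfolding adh_def
  proof (rule Inf_greatest)
    fix y assume "y \<in> {raw_adh lim2 a |a. a \<in> complemented \<and> l \<le> a}"
    then obtain a where a: "y = raw_adh lim2 a" "a \<in> complemented" "l \<le> a" by blast
    have "Inf {raw_adh lim1 a |a. a \<in> complemented \<and> l \<le> a} \<le> raw_adh lim1 a" by (rule Inf_lower) (use a in blast)
    also have "\<dots> \<le> y" using r a(1) by simp
    finally show "Inf {raw_adh lim1 a |a. a \<in> complemented \<and> l \<le> a} \<le> y" .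
  qed
qed

lemma lim_of_mono:
  assumes h: "nu1 \<le> nu2" shows "lim_of nu1 F \<le> lim_of nu2 F"
  unfolding lim_of_def
proof (rule Inf_greatest)
  fix y assume "y \<in> {nu2 a |a. a \<in> complemented \<inter> sharp F}"
  then obtain a where a: "y = nu2 a" "a \<in> complemented \<inter> sharp F" by blast
  have "Inf {nu1 a |a. a \<in> complemented \<inter> sharp F} \<le> nu1 a" by (rule Inf_lower) (use a in blast)
  also have "\<dots> \<le> y" using h a(1) by (simp add: le_fun_def)
  finally show "Inf {nu1 a |a. a \<in> complemented \<inter> sharp F} \<le> y" .
qed

theorem mainTheorem10:
  shows "(spatial TYPE('a::coframe) \<longrightarrow>
            (\<forall>\<nu>::'a \<Rightarrow> 'a. adherence_structure \<nu> \<longrightarrow> adh (lim_of \<nu>) = \<nu>))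
       \<and> (prime_continuous TYPE('a) \<longrightarrow>
            (\<forall>lim::'a set \<Rightarrow> 'a. classical_pretop_conv lim \<longrightarrow>
               (\<forall>F. is_filter F \<longrightarrow> lim_of (adh lim) F = lim F)))
       \<and> (spatial TYPE('a) \<and> prime_continuous TYPE('a) \<longrightarrow>
            (\<forall>\<nu>::'a \<Rightarrow> 'a. adherence_structure \<nu> \<longrightarrow> classical_pretop_conv (lim_of \<nu>))
          \<and> (\<forall>lim::'a set \<Rightarrow> 'a. classical_pretop_conv lim \<longrightarrow> adherence_structure (adh lim))
          \<and> (\<forall>\<nu>::'a \<Rightarrow> 'a. adherence_structure \<nu> \<longrightarrow> adh (lim_of \<nu>) = \<nu>)
          \<and> (\<forall>lim::'a set \<Rightarrow> 'a. classical_pretop_conv lim \<longrightarrow>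
               (\<forall>F. is_filter F \<longrightarrow> lim_of (adh lim) F = lim F))
          \<and> (\<forall>\<nu>1 \<nu>2::'a \<Rightarrow> 'a. adherence_structure \<nu>1 \<longrightarrow> adherence_structure \<nu>2 \<longrightarrow>
               (\<nu>1 \<le> \<nu>2 \<longleftrightarrow> (\<forall>F. is_filter F \<longrightarrow> lim_of \<nu>1 F \<le> lim_of \<nu>2 F)))
          \<and> (\<forall>lim1 lim2::'a set \<Rightarrow> 'a. classical_pretop_conv lim1 \<longrightarrow> classical_pretop_conv lim2 \<longrightarrow>
               ((\<forall>F. is_filter F \<longrightarrow> lim1 F \<le> lim2 F) \<longleftrightarrow> adh lim1 \<le> adh lim2)))"
proof (intro conjI impI allI)
  fix nu :: "'a \<Rightarrow> 'a" assume "spatial TYPE('a)" "adherence_structure nu"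
  thus "adh (lim_of nu) = nu" by (rule part1)
next
  fix lim :: "'a set \<Rightarrow> 'a" and F :: "'a set" assume "prime_continuous TYPE('a)" "classical_pretop_conv lim" "is_filter F"
  thus "lim_of (adh lim) F = lim F" by (rule part2)
next
  fix nu :: "'a \<Rightarrow> 'a" assume "adherence_structure nu"
  thus "classical_pretop_conv (lim_of nu)" by (rule lim_of_cpc)
next
  fix lim :: "'a set \<Rightarrow> 'a"
  show "adherence_structure (adh lim)" by (rule adh_as)
next
  fix nu :: "'a \<Rightarrow> 'a" assume "spatial TYPE('a) \<and> prime_continuous TYPE('a)" "adherence_structure nu"
  thus "adh (lim_of nu) = nu" using part1 by blast
next
  fix lim :: "'a set \<Rightarrow> 'a" and F :: "'a set" assume "spatial TYPE('a) \<and> prime_continuous TYPE('a)" "classical_pretop_conv lim" "is_filter F"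
  thus "lim_of (adh lim) F = lim F" using part2 by blast
next
  fix nu1 nu2 :: "'a \<Rightarrow> 'a" assume sp: "spatial TYPE('a) \<and> prime_continuous TYPE('a)"
    and a1: "adherence_structure nu1" and a2: "adherence_structure nu2"
  show "nu1 \<le> nu2 \<longleftrightarrow> (\<forall>F. is_filter F \<longrightarrow> lim_of nu1 F \<le> lim_of nu2 F)"
  proof
    assume "nu1 \<le> nu2" thus "\<forall>F. is_filter F \<longrightarrow> lim_of nu1 F \<le> lim_of nu2 F" by (simp add: lim_of_mono)
  next
    assume "\<forall>F. is_filter F \<longrightarrow> lim_of nu1 F \<le> lim_of nu2 F"
    hence "adh (lim_of nu1) \<le> adh (lim_of nu2)" by (rule adh_mono_lim)
    thus "nu1 \<le> nu2" using part1 sp a1 a2 by metis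
  qed
next
  fix lim1 lim2 :: "'a set \<Rightarrow> 'a" assume sp: "spatial TYPE('a) \<and> prime_continuous TYPE('a)"
    and c1: "classical_pretop_conv lim1" and c2: "classical_pretop_conv lim2"
  show "(\<forall>F. is_filter F \<longrightarrow> lim1 F \<le> lim2 F) \<longleftrightarrow> adh lim1 \<le> adh lim2"
  proof
    assume "\<forall>F. is_filter F \<longrightarrow> lim1 F \<le> lim2 F" thus "adh lim1 \<le> adh lim2" by (rule adh_mono_lim)
  next
    assume h: "adh lim1 \<le> adh lim2"
    show "\<forall>F. is_filter F \<longrightarrow> lim1 F \<le> lim2 F"
    proof (intro allI impI)
      fix F :: "'a set" assume F: "is_filter F"
      have "lim1 F = lim_of (adh lim1) F" using part2 sp c1 F by metis
      also have "\<dots> \<le> lim_of (adh lim2) F" using h by (rule lim_of_mono)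
      also have "\<dots> = lim2 F" using part2 sp c2 F by metis
      finally show "lim1 F \<le> lim2 F" .
    qed
  qed
qed

end
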